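(* For every integer $N\ge 0$, let $T(N)$ be the number of tilings of a $3\times 4\times n$ box, $n=N/3$, by $N$ bricks of size $1\times 2\times 2$ (and $0$ if $3\nmid N$). Then, as formal power series, \[ \sum_{N\ge 0} T(N)\,z^N=\frac{(1-2z^6)(1-24z^6+122z^{12}-120z^{18})}{(1-z^6)(1-54z^6+646z^{12}-2540z^{18}+2640z^{24})}. \]
   Context: A tiling of a $k\times m\times n$ box (made of $kmn$ unit cubes) by $a\times b\times c$ bricks is a partition of the box into non-overlapping axis-parallel boxes with integer corner coordinates, each congruent (by an axis-permuting placement) to the $a\times b\times c$ brick; all orientations are allowed. Tilings related by symmetries of the box are counted as distinct. The empty tiling counts once for $N=0$. *)

theory Defs
  imports "HOL-Computational_Algebra.Formal_Power_Series"
begin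

type_synonym cell = "nat \<times> nat \<times> nat"

definition cuboid :: "nat \<Rightarrow> nat \<Rightarrow> nat \<Rightarrow> nat \<Rightarrow> nat \<Rightarrow> nat \<Rightarrow> cell set" where
  "cuboid x0 y0 z0 p q r =
     {(x, y, z). x0 \<le> x \<and> x < x0 + p \<and> y0 \<le> y \<and> y < y0 + q \<and> z0 \<le> z \<and> z < z0 + r}"

definition is_brick :: "nat \<Rightarrow> nat \<Rightarrow> nat \<Rightarrow> cell set \<Rightarrow> bool" where
  "is_brick a b c B \<longleftrightarrow>
     (\<exists>x0 y0 z0 p q r.
        (p, q, r) \<in> {(a, b, c), (a, c, b), (b, a, c), (b, c, a), (c, a, b), (c, b, a)} \<and>
        B = cuboid x0 y0 z0 p q r)"

definition tilings :: "nat \<Rightarrow> nat \<Rightarrow> nat \<Rightarrow> nat \<Rightarrow> nat \<Rightarrow> nat \<Rightarrow> cell set set set" where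
  "tilings a b c k m n =
     {P. (\<forall>B\<in>P. is_brick a b c B) \<and>
         (\<forall>B\<in>P. \<forall>C\<in>P. B \<noteq> C \<longrightarrow> B \<inter> C = {}) \<and>
         \<Union>P = cuboid 0 0 0 k m n}"

definition T :: "nat \<Rightarrow> nat" where
  "T N = (if 3 dvd N then card {P \<in> tilings 1 2 2 3 4 (N div 3). card P = N} else 0)"

end

theory Submission
  imports Defs
begin

definition til :: "cell set \<Rightarrow> cell set set set" where
  "til R = {P. (\<forall>B\<in>P. is_brick 1 2 2 B) \<and> (\<forall>B\<in>P. \<forall>C\<in>P. B \<noteq> C \<longrightarrow> B \<inter> C = {}) \<and> \<Union>P = R}"

lemma til_finite: "finite R \<Longrightarrow> finite (til R)"
  by (rule finite_subset[of _ "Pow (Pow R)"]) (auto simp: til_def)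

definition cands :: "nat \<Rightarrow> nat \<Rightarrow> nat \<Rightarrow> cell set set" where
  "cands x0 y0 z0 = {cuboid x0 y0 z0 2 2 1} \<union>
     (if 1 \<le> z0 then {cuboid x0 y0 (z0-1) 2 1 2, cuboid x0 y0 (z0-1) 1 2 2} else {})"

lemma brick_corner:
  assumes "is_brick 1 2 2 B" "(x0,y0,z0) \<in> B" "B \<subseteq> R"
    and minc: "\<forall>(x,y,z)\<in>R. z < z0 \<or> (z = z0 \<and> (y0 < y \<or> (y0 = y \<and> x0 \<le> x)))"
  shows "B \<in> cands x0 y0 z0"
proof -
  obtain a b d p q r where pqr0: "(p, q, r) \<in> {(1, 2, 2), (1, 2, 2), (2, 1, 2), (2, 2, 1), (2, 1, 2), (2, 2, 1)}"
      and B: "B = cuboid a b d p q r"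
    using assms(1) unfolding is_brick_def by blast
  have pqr: "(p,q,r) \<in> {(1,2,2),(2,1,2),(2,2,1)}" using pqr0 by auto
  have c: "a \<le> x0" "x0 < a + p" "b \<le> y0" "y0 < b+q" "d \<le> z0" "z0 < d + r"
    using assms(2) B by (auto simp: cuboid_def)
  have "(a, b, d+r-1) \<in> B" using B pqr by (auto simp: cuboid_def)
  then have "(a, b, d+r-1) \<in> R" using assms(3) by auto
  with minc have "d+r-1 < z0 \<or> (d+r-1 = z0 \<and> (y0 < b \<or> (y0 = b \<and> x0 \<le> a)))" by auto
  with c have e: "d + r - 1 = z0" "a = x0" "b = y0" by auto
  show ?thesis using pqr e c unfolding B cands_def by auto
qed

lemma brick_cub: "(p,q,r) \<in> {(1,2,2),(2,1,2),(2,2,1)} \<Longrightarrow> is_brick 1 2 2 (cuboid a b d p q r)"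
  unfolding is_brick_def by blast

lemma cands_brick: "B \<in> cands x0 y0 z0 \<Longrightarrow> is_brick 1 2 2 B \<and> (x0,y0,z0) \<in> B"
proof -
  assume "B \<in> cands x0 y0 z0"
  then consider "B = cuboid x0 y0 z0 2 2 1" | "1 \<le> z0" "B = cuboid x0 y0 (z0-1) 2 1 2"
    | "1 \<le> z0" "B = cuboid x0 y0 (z0-1) 1 2 2"
    unfolding cands_def by (auto split: if_splits)
  then show ?thesis
  proof cases
    case 1 then show ?thesis using brick_cub[of 2 2 1 x0 y0 z0] by (simp add: cuboid_def)
  next
    case 2 then show ?thesis using brick_cub[of 2 1 2 x0 y0 "z0-1"] by (simp add: cuboid_def)
  next
    case 3 then show ?thesis using brick_cub[of 1 2 2 x0 y0 "z0-1"] by (simp add: cuboid_def)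
  qed
qed

lemma MC:
  assumes fin: "finite R" and cR: "(x0,y0,z0) \<in> R"
    and minc: "\<forall>(x,y,z)\<in>R. z < z0 \<or> (z = z0 \<and> (y0 < y \<or> (y0 = y \<and> x0 \<le> x)))"
  shows "card (til R) = (\<Sum>B \<in> {B \<in> cands x0 y0 z0. B \<subseteq> R}. card (til (R - B)))"
proof -
  let ?c = "(x0,y0,z0)"
  let ?K = "{B \<in> cands x0 y0 z0. B \<subseteq> R}"
  have finK: "finite ?K" unfolding cands_def by auto
  have eq: "til R = (\<Union>B\<in>?K. {P \<in> til R. B \<in> P})"
  proof
    show "til R \<subseteq> (\<Union>B\<in>?K. {P \<in> til R. B \<in> P})"
    proof
      fix P assume P: "P \<in> til R"
      then obtain B where B: "B \<in> P" "?c \<in> B" using cR unfolding til_def by auto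
      have "B \<subseteq> R" using P B unfolding til_def by auto
      moreover have "B \<in> cands x0 y0 z0"
        using brick_corner[OF _ B(2) \<open>B \<subseteq> R\<close> minc] P B unfolding til_def by auto
      ultimately show "P \<in> (\<Union>B\<in>?K. {P \<in> til R. B \<in> P})" using P B by auto
    qed
  qed auto
  have disj: "\<forall>B1\<in>?K. \<forall>B2\<in>?K. B1 \<noteq> B2 \<longrightarrow> {P \<in> til R. B1 \<in> P} \<inter> {P \<in> til R. B2 \<in> P} = {}"
  proof (intro ballI impI)
    fix B1 B2 assume "B1 \<in> ?K" "B2 \<in> ?K" "B1 \<noteq> B2"
    then have "?c \<in> B1" "?c \<in> B2" using cands_brick by auto
    then show "{P \<in> til R. B1 \<in> P} \<inter> {P \<in> til R. B2 \<in> P} = {}"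
      using \<open>B1 \<noteq> B2\<close> unfolding til_def by blast
  qed
  have each: "card {P \<in> til R. B \<in> P} = card (til (R - B))" if BK: "B \<in> ?K" for B
  proof -
    have Bb: "is_brick 1 2 2 B" "?c \<in> B" "B \<subseteq> R" using BK cands_brick by auto
    show ?thesis
    proof (rule bij_betw_same_card[of "\<lambda>P. P - {B}"], rule bij_betw_byWitness[of _ "insert B"])
      show "\<forall>P\<in>{P \<in> til R. B \<in> P}. insert B (P - {B}) = P" by auto
      show "\<forall>Q\<in>til (R - B). insert B Q - {B} = Q"
      proof
        fix Q assume Q: "Q \<in> til (R - B)"
        have "B \<notin> Q"
        proof
          assume "B \<in> Q" then have "B \<subseteq> R - B" using Q unfolding til_def by auto
          then show False using Bb(2) by auto
        qed
        then show "insert B Q - {B} = Q" by auto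
      qed
      show "(\<lambda>P. P - {B}) ` {P \<in> til R. B \<in> P} \<subseteq> til (R - B)"
      proof
        fix Q assume "Q \<in> (\<lambda>P. P - {B}) ` {P \<in> til R. B \<in> P}"
        then obtain P where P: "P \<in> til R" "B \<in> P" "Q = P - {B}" by auto
        have "\<Union>Q = R - B"
        proof
          show "\<Union>Q \<subseteq> R - B" using P unfolding til_def by blast
          show "R - B \<subseteq> \<Union>Q" using P unfolding til_def by blast
        qed
        then show "Q \<in> til (R - B)" using P unfolding til_def by blast
      qed
      show "insert B ` til (R - B) \<subseteq> {P \<in> til R. B \<in> P}"
      proof
        fix P assume "P \<in> insert B ` til (R - B)"
        then obtain Q where Q: "Q \<in> til (R - B)" "P = insert B Q" by auto
        have Qb: "\<forall>C\<in>Q. is_brick 1 2 2 C" and Qd: "\<forall>C\<in>Q. \<forall>D\<in>Q. C \<noteq> D \<longrightarrow> C \<inter> D = {}"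
          and Qu: "\<Union>Q = R - B" using Q unfolding til_def by auto
        have d1: "\<forall>C\<in>Q. B \<inter> C = {}" using Qu by blast
        have "\<forall>C\<in>insert B Q. is_brick 1 2 2 C" using Qb Bb(1) by simp
        moreover have "\<forall>C\<in>insert B Q. \<forall>D\<in>insert B Q. C \<noteq> D \<longrightarrow> C \<inter> D = {}"
          using Qd d1 by blast
        moreover have "\<Union>(insert B Q) = R" using Qu Bb(3) by auto
        ultimately show "P \<in> {P \<in> til R. B \<in> P}" using Q(2) unfolding til_def by simp
      qed
    qed
  qed
  have "card (til R) = card (\<Union>B\<in>?K. {P \<in> til R. B \<in> P})"
    using arg_cong[where f=card, OF eq] .
  also have "\<dots> = (\<Sum>B\<in>?K. card {P \<in> til R. B \<in> P})"
    by (rule card_UN_disjoint[OF finK]) (use til_finite[OF fin] disj in auto)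
  also have "\<dots> = (\<Sum>B\<in>?K. card (til (R - B)))" using each by (rule sum.cong[OF refl])
  finally show ?thesis .
qed


definition idx :: "nat \<Rightarrow> nat \<Rightarrow> nat" where "idx x y = 3 * y + x"

lemma idx_eq: "x < 3 \<Longrightarrow> x' < 3 \<Longrightarrow> (idx x y = idx x' y') \<longleftrightarrow> (x = x' \<and> y = y')"
  unfolding idx_def by presburger

lemma idx_lt: "x < 3 \<Longrightarrow> y < 4 \<Longrightarrow> idx x y < 12"
  unfolding idx_def by simp

definition Rg :: "nat \<Rightarrow> nat set \<Rightarrow> nat set \<Rightarrow> cell set" where
  "Rg h F0 F1 = {(x,y,z). x < 3 \<and> y < 4 \<and> z \<le> h \<and> (z = h \<longrightarrow> idx x y \<notin> F0) \<and> (Suc z = h \<longrightarrow> idx x y \<notin> F1)}"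

definition RR :: "nat \<Rightarrow> nat set \<Rightarrow> cell set" where
  "RR h S = {(x,y,z). x < 3 \<and> y < 4 \<and> z < h \<and> (Suc z = h \<longrightarrow> idx x y \<notin> S)}"

definition cnt :: "nat \<Rightarrow> nat set \<Rightarrow> nat" where
  "cnt h S = (if h = 0 then (if S = {} then 1 else 0) else card (til (RR h S)))"

definition cc :: "nat \<Rightarrow> nat set \<Rightarrow> nat set \<Rightarrow> nat" where
  "cc h F0 F1 = (if h = 0 \<and> F1 \<noteq> {} then 0 else card (til (Rg h F0 F1)))"

lemma Rg_fin: "finite (Rg h F0 F1)"
  by (rule finite_subset[of _ "{..<3} \<times> {..<4} \<times> {..h}"]) (auto simp: Rg_def)

lemma brick_ne: "is_brick 1 2 2 B \<Longrightarrow> B \<noteq> {}"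
  unfolding is_brick_def cuboid_def by auto

lemma til_empty: "til {} = {{}}"
  unfolding til_def using brick_ne by auto

lemma cnt_Suc: "cnt (Suc h) S = cc h S {}"
proof -
  have "RR (Suc h) S = Rg h S {}" unfolding RR_def Rg_def by auto
  then show ?thesis unfolding cnt_def cc_def by simp
qed

lemma cc_full: "{0..<12} \<subseteq> F0 \<Longrightarrow> cc h F0 F1 = cnt h F1"
proof -
  assume F: "{0..<12} \<subseteq> F0"
  have "Rg h F0 F1 = RR h F1"
  proof (rule set_eqI, clarify)
    fix x y z
    show "((x,y,z) \<in> Rg h F0 F1) = ((x,y,z) \<in> RR h F1)"
      using F idx_lt[of x y] unfolding Rg_def RR_def by (cases "z = h") auto
  qed
  moreover have "Rg 0 F0 F1 = {}" using F idx_lt unfolding Rg_def by auto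
  ultimately show ?thesis unfolding cc_def cnt_def by (auto simp: til_empty)
qed

lemma cub221: "cuboid a b d 2 2 1 = {(a,b,d),(Suc a,b,d),(a,Suc b,d),(Suc a,Suc b,d)}"
  by (auto simp: cuboid_def numeral_2_eq_2 less_Suc_eq)
lemma cub212: "cuboid a b d 2 1 2 = {(a,b,d),(Suc a,b,d),(a,b,Suc d),(Suc a,b,Suc d)}"
  by (auto simp: cuboid_def numeral_2_eq_2 less_Suc_eq)
lemma cub122: "cuboid a b d 1 2 2 = {(a,b,d),(a,Suc b,d),(a,b,Suc d),(a,Suc b,Suc d)}"
  by (auto simp: cuboid_def numeral_2_eq_2 less_Suc_eq)


lemma L1:
  assumes x0: "x0 < 3" and y0: "y0 < 4" and free: "idx x0 y0 \<notin> F0" and below: "\<forall>j < idx x0 y0. j \<in> F0"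
  shows "cc h F0 F1 =
   (if x0 < 2 \<and> y0 < 3 \<and> idx (Suc x0) y0 \<notin> F0 \<and> idx x0 (Suc y0) \<notin> F0 \<and> idx (Suc x0) (Suc y0) \<notin> F0
     then cc h (F0 \<union> {idx x0 y0, idx (Suc x0) y0, idx x0 (Suc y0), idx (Suc x0) (Suc y0)}) F1 else 0)
  + (if x0 < 2 \<and> idx (Suc x0) y0 \<notin> F0 \<and> idx x0 y0 \<notin> F1 \<and> idx (Suc x0) y0 \<notin> F1
     then cc h (F0 \<union> {idx x0 y0, idx (Suc x0) y0}) (F1 \<union> {idx x0 y0, idx (Suc x0) y0}) else 0)
  + (if y0 < 3 \<and> idx x0 (Suc y0) \<notin> F0 \<and> idx x0 y0 \<notin> F1 \<and> idx x0 (Suc y0) \<notin> F1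
     then cc h (F0 \<union> {idx x0 y0, idx x0 (Suc y0)}) (F1 \<union> {idx x0 y0, idx x0 (Suc y0)}) else 0)"
  (is "_ = ?f + ?x + ?y")
proof (cases "h = 0 \<and> F1 \<noteq> {}")
  case True then show ?thesis unfolding cc_def by auto
next
  case False
  let ?R = "Rg h F0 F1"
  let ?Bf = "{(x0,y0,h),(Suc x0,y0,h),(x0,Suc y0,h),(Suc x0,Suc y0,h)}"
  let ?F0f = "F0 \<union> {idx x0 y0, idx (Suc x0) y0, idx x0 (Suc y0), idx (Suc x0) (Suc y0)}"
  let ?cf = "x0 < 2 \<and> y0 < 3 \<and> idx (Suc x0) y0 \<notin> F0 \<and> idx x0 (Suc y0) \<notin> F0 \<and> idx (Suc x0) (Suc y0) \<notin> F0"
  have lhs: "cc h F0 F1 = card (til ?R)" using False unfolding cc_def by auto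
  have cR: "(x0,y0,h) \<in> ?R" using x0 y0 free unfolding Rg_def by auto
  have minc: "\<forall>(x,y,z)\<in>?R. z < h \<or> (z = h \<and> (y0 < y \<or> (y0 = y \<and> x0 \<le> x)))"
  proof -
    have "z < h \<or> (z = h \<and> (y0 < y \<or> (y0 = y \<and> x0 \<le> x)))" if xyz: "(x,y,z) \<in> ?R" for x y z
    proof (cases "z < h")
      case False
      have "z = h" "x < 3" "idx x y \<notin> F0" using xyz False unfolding Rg_def by auto
      then have "\<not> idx x y < idx x0 y0" using below by auto
      then have "y0 < y \<or> (y0 = y \<and> x0 \<le> x)" using \<open>x < 3\<close> x0 unfolding idx_def by auto
      then show ?thesis using \<open>z = h\<close> by auto
    qed simp
    then show ?thesis by auto
  qed
  have MCe: "card (til ?R) = (\<Sum>B \<in> {B \<in> cands x0 y0 h. B \<subseteq> ?R}. card (til (?R - B)))"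
    by (rule MC[OF Rg_fin cR minc])
  have f1: "?Bf \<subseteq> ?R \<longleftrightarrow> ?cf" using x0 y0 free unfolding Rg_def by auto
  have f2: "?R - ?Bf = Rg h ?F0f F1" if cf: ?cf
  proof -
    have "((x,y,z) \<in> ?R - ?Bf) = ((x,y,z) \<in> Rg h ?F0f F1)" for x y z
      using cf x0 by (cases "x < 3"; cases "z = h") (auto simp: Rg_def idx_eq)
    then show ?thesis by auto
  qed
  have ftm: "(if ?Bf \<subseteq> ?R then card (til (?R - ?Bf)) else 0) = ?f"
    using f1 f2 False unfolding cc_def by auto
  show ?thesis
  proof (cases h)
    case 0
    then have F1: "F1 = {}" using False by auto
    have cd: "cands x0 y0 h = {?Bf}" unfolding cands_def cub221 using 0 by simp
    have "card (til ?R) = (\<Sum>B\<in>{?Bf}. if B \<subseteq> ?R then card (til (?R - B)) else 0)"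
      unfolding MCe cd by (rule sum.inter_filter) simp
    then have "card (til ?R) = (if ?Bf \<subseteq> ?R then card (til (?R - ?Bf)) else 0)"
      by (simp only: sum.empty sum.insert finite.emptyI empty_iff) simp
    moreover have "?x = 0" "?y = 0" using 0 unfolding cc_def by auto
    ultimately show ?thesis using lhs ftm by simp
  next
    case (Suc g)
    let ?Bx = "{(x0,y0,g),(Suc x0,y0,g),(x0,y0,h),(Suc x0,y0,h)}"
    let ?By = "{(x0,y0,g),(x0,Suc y0,g),(x0,y0,h),(x0,Suc y0,h)}"
    have cd: "cands x0 y0 h = {?Bf, ?Bx, ?By}" unfolding cands_def cub221 cub212 cub122 using Suc
      by (simp add: insert_commute)
    have w: "(x0,y0,g) \<in> ?Bx" "(x0,y0,g) \<notin> ?Bf" "(x0,y0,g) \<in> ?By" "(Suc x0,y0,g) \<in> ?Bx" "(Suc x0,y0,g) \<notin> ?By"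
      using Suc by auto
    have d1: "?Bf \<noteq> ?Bx" "?Bf \<noteq> ?By" "?Bx \<noteq> ?By" using w by metis+
    have x1: "?Bx \<subseteq> ?R \<longleftrightarrow> x0 < 2 \<and> idx (Suc x0) y0 \<notin> F0 \<and> idx x0 y0 \<notin> F1 \<and> idx (Suc x0) y0 \<notin> F1"
      using x0 y0 free Suc unfolding Rg_def by auto
    have x2: "?R - ?Bx = Rg h (F0 \<union> {idx x0 y0, idx (Suc x0) y0}) (F1 \<union> {idx x0 y0, idx (Suc x0) y0})" if "x0 < 2"
    proof -
      have "((x,y,z) \<in> ?R - ?Bx) = ((x,y,z) \<in> Rg h (F0 \<union> {idx x0 y0, idx (Suc x0) y0}) (F1 \<union> {idx x0 y0, idx (Suc x0) y0}))" for x y z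
        using that x0 Suc by (cases "x < 3"; cases "z = h"; cases "z = g") (auto simp: Rg_def idx_eq)
      then show ?thesis by auto
    qed
    have y1: "?By \<subseteq> ?R \<longleftrightarrow> y0 < 3 \<and> idx x0 (Suc y0) \<notin> F0 \<and> idx x0 y0 \<notin> F1 \<and> idx x0 (Suc y0) \<notin> F1"
      using x0 y0 free Suc unfolding Rg_def by auto
    have y2: "?R - ?By = Rg h (F0 \<union> {idx x0 y0, idx x0 (Suc y0)}) (F1 \<union> {idx x0 y0, idx x0 (Suc y0)})" if "y0 < 3"
    proof -
      have "((x,y,z) \<in> ?R - ?By) = ((x,y,z) \<in> Rg h (F0 \<union> {idx x0 y0, idx x0 (Suc y0)}) (F1 \<union> {idx x0 y0, idx x0 (Suc y0)}))" for x y z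
        using that x0 Suc by (cases "x < 3"; cases "z = h"; cases "z = g") (auto simp: Rg_def idx_eq)
      then show ?thesis by auto
    qed
    have xtm: "(if ?Bx \<subseteq> ?R then card (til (?R - ?Bx)) else 0) = ?x"
      using x1 x2 Suc unfolding cc_def by auto
    have ytm: "(if ?By \<subseteq> ?R then card (til (?R - ?By)) else 0) = ?y"
      using y1 y2 Suc unfolding cc_def by auto
    have "card (til ?R) = (\<Sum>B\<in>{?Bf, ?Bx, ?By}. if B \<subseteq> ?R then card (til (?R - B)) else 0)"
      unfolding MCe cd by (rule sum.inter_filter) simp
    also have "\<dots> = (if ?Bf \<subseteq> ?R then card (til (?R - ?Bf)) else 0)
       + (if ?Bx \<subseteq> ?R then card (til (?R - ?Bx)) else 0)
       + (if ?By \<subseteq> ?R then card (til (?R - ?By)) else 0)"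
      using d1 by (simp add: add.assoc)
    finally show ?thesis using lhs ftm xtm ytm by simp
  qed
qed


lemma filter_upt_hd: "filter P [a..<b] = y # ys \<Longrightarrow> a \<le> y \<and> y < b \<and> P y \<and> (\<forall>j. a \<le> j \<and> j < y \<longrightarrow> \<not> P j)"
proof (induction b arbitrary: y ys)
  case 0 then show ?case by simp
next
  case (Suc b)
  show ?case
  proof (cases "a \<le> b")
    case True
    then have e: "filter P [a..<Suc b] = filter P [a..<b] @ filter P [b]" by simp
    show ?thesis
    proof (cases "filter P [a..<b]")
      case Nil
      then have "\<forall>j\<in>set [a..<b]. \<not> P j" by (simp add: filter_empty_conv)
      moreover have "y = b" "P b" using Suc.prems e Nil by (auto split: if_splits)
      ultimately show ?thesis using True by auto
    next
      case (Cons z zs)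
      then have "y = z" using Suc.prems e by simp
      then show ?thesis using Suc.IH[OF Cons] by auto
    qed
  next
    case False
    then have "[a..<Suc b] = []" by simp
    then show ?thesis using Suc.prems by simp
  qed
qed

definition ff :: "nat set \<Rightarrow> nat" where "ff F = hd (filter (\<lambda>j. j \<notin> F) [0..<12])"

lemma ff_prop: assumes "\<not> set [0..<12] \<subseteq> F" shows "ff F < 12" "ff F \<notin> F" "\<forall>j < ff F. j \<in> F"
proof -
  have "filter (\<lambda>j. j \<notin> F) [0..<12] \<noteq> []" using assms by (auto simp: filter_empty_conv)
  then obtain y ys where e: "filter (\<lambda>j. j \<notin> F) [0..<12] = y # ys" by (cases "filter (\<lambda>j. j \<notin> F) [0..<12]") auto
  have "ff F = y" unfolding ff_def e by simp
  then show "ff F < 12" "ff F \<notin> F" "\<forall>j < ff F. j \<in> F" using filter_upt_hd[OF e] by auto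
qed

lemma upt12: "[0..<12] = [0,1,2,3,4,5,6,7,8,9,10,11::nat]" by (simp add: upt_rec numeral_eq_Suc)

lemma step: "cc h F0 F1 = (if set [0..<12] \<subseteq> F0 then cnt h F1 else
  (let i = ff F0 in
   (if i mod 3 < 2 \<and> i div 3 < 3 \<and> i+1 \<notin> F0 \<and> i+3 \<notin> F0 \<and> i+4 \<notin> F0
     then cc h (F0 \<union> {i, i+1, i+3, i+4}) F1 else 0)
  + (if i mod 3 < 2 \<and> i+1 \<notin> F0 \<and> i \<notin> F1 \<and> i+1 \<notin> F1
     then cc h (F0 \<union> {i, i+1}) (F1 \<union> {i, i+1}) else 0)
  + (if i div 3 < 3 \<and> i+3 \<notin> F0 \<and> i \<notin> F1 \<and> i+3 \<notin> F1
     then cc h (F0 \<union> {i, i+3}) (F1 \<union> {i, i+3}) else 0)))"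
proof (cases "set [0..<12] \<subseteq> F0")
  case True
  then show ?thesis using cc_full[of F0 h F1] by simp
next
  case False
  note fp = ff_prop[OF False]
  define i where "i = ff F0"
  have ii: "idx (i mod 3) (i div 3) = i" "idx (Suc (i mod 3)) (i div 3) = i + 1"
    "idx (i mod 3) (Suc (i div 3)) = i + 3" "idx (Suc (i mod 3)) (Suc (i div 3)) = i + 4"
    unfolding idx_def by simp_all
  have h1: "i mod 3 < 3" "i div 3 < 4" "idx (i mod 3) (i div 3) \<notin> F0" "\<forall>j < idx (i mod 3) (i div 3). j \<in> F0"
    using fp ii by (auto simp: i_def)
  show ?thesis using L1[OF h1, of h F1] False unfolding ii by (simp add: Let_def i_def)
qed

lemma tr0: "cnt (Suc h) {} = 1 * cnt h {0,3,6,9} + 1 * cnt h {2,5,6,9} + 3 * cnt h {0,1,2,3,4,5,6,9} + 1 * cnt h {0,3,8,11} + 1 * cnt h {2,5,8,11} + 3 * cnt h {0,1,2,3,4,5,8,11} + 1 * cnt h {0,1,2,3,6,9,10,11} + 1 * cnt h {0,1,2,5,8,9,10,11} + 3 * cnt h {0,3,6,7,8,9,10,11} + 3 * cnt h {2,5,6,7,8,9,10,11} + 11 * cnt h {0,1,2,3,4,5,6,7,8,9,10,11}"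
  by (simp add: cnt_Suc step ff_def idx_def Let_def upt12 insert_commute numeral_2_eq_2[symmetric] cong: if_weak_cong; linarith?)
lemma tr1: "cnt (Suc h) {2,5,8,11} = 1 * cnt h {} + 2 * cnt h {0,1,3,4} + 1 * cnt h {0,1,9,10} + 2 * cnt h {6,7,9,10} + 5 * cnt h {0,1,3,4,6,7,9,10}"
  by (simp add: cnt_Suc step ff_def idx_def Let_def upt12 insert_commute numeral_2_eq_2[symmetric] cong: if_weak_cong; linarith?)
lemma tr2: "cnt (Suc h) {2,5,6,7,8,9,10,11} = 1 * cnt h {} + 2 * cnt h {0,1,3,4}"
  by (simp add: cnt_Suc step ff_def idx_def Let_def upt12 insert_commute numeral_2_eq_2[symmetric] cong: if_weak_cong; linarith?)
lemma tr3: "cnt (Suc h) {2,5,6,9} = 1 * cnt h {} + 2 * cnt h {0,1,3,4} + 2 * cnt h {7,8,10,11} + 4 * cnt h {0,1,3,4,7,8,10,11}"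
  by (simp add: cnt_Suc step ff_def idx_def Let_def upt12 insert_commute numeral_2_eq_2[symmetric] cong: if_weak_cong; linarith?)
lemma tr4: "cnt (Suc h) {0,1,2,5,8,9,10,11} = 1 * cnt h {} + 2 * cnt h {3,4,6,7}"
  by (simp add: cnt_Suc step ff_def idx_def Let_def upt12 insert_commute numeral_2_eq_2[symmetric] cong: if_weak_cong; linarith?)
lemma tr5: "cnt (Suc h) {0,1,2,3,4,5,8,11} = 1 * cnt h {} + 2 * cnt h {6,7,9,10}"
  by (simp add: cnt_Suc step ff_def idx_def Let_def upt12 insert_commute numeral_2_eq_2[symmetric] cong: if_weak_cong; linarith?)
lemma tr6: "cnt (Suc h) {0,1,2,3,4,5,6,7,8,9,10,11} = 1 * cnt h {}"
  by (simp add: cnt_Suc step ff_def idx_def Let_def upt12 insert_commute numeral_2_eq_2[symmetric] cong: if_weak_cong; linarith?)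
lemma tr7: "cnt (Suc h) {0,1,2,3,4,5,6,9} = 1 * cnt h {} + 2 * cnt h {7,8,10,11}"
  by (simp add: cnt_Suc step ff_def idx_def Let_def upt12 insert_commute numeral_2_eq_2[symmetric] cong: if_weak_cong; linarith?)
lemma tr8: "cnt (Suc h) {0,3,8,11} = 1 * cnt h {} + 2 * cnt h {1,2,4,5} + 2 * cnt h {6,7,9,10} + 4 * cnt h {1,2,4,5,6,7,9,10}"
  by (simp add: cnt_Suc step ff_def idx_def Let_def upt12 insert_commute numeral_2_eq_2[symmetric] cong: if_weak_cong; linarith?)
lemma tr9: "cnt (Suc h) {0,3,6,7,8,9,10,11} = 1 * cnt h {} + 2 * cnt h {1,2,4,5}"
  by (simp add: cnt_Suc step ff_def idx_def Let_def upt12 insert_commute numeral_2_eq_2[symmetric] cong: if_weak_cong; linarith?)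
lemma tr10: "cnt (Suc h) {0,3,6,9} = 1 * cnt h {} + 2 * cnt h {1,2,4,5} + 1 * cnt h {1,2,10,11} + 2 * cnt h {7,8,10,11} + 5 * cnt h {1,2,4,5,7,8,10,11}"
  by (simp add: cnt_Suc step ff_def idx_def Let_def upt12 insert_commute numeral_2_eq_2[symmetric] cong: if_weak_cong; linarith?)
lemma tr11: "cnt (Suc h) {0,1,2,3,6,9,10,11} = 1 * cnt h {} + 2 * cnt h {4,5,7,8}"
  by (simp add: cnt_Suc step ff_def idx_def Let_def upt12 insert_commute numeral_2_eq_2[symmetric] cong: if_weak_cong; linarith?)
lemma tr12: "cnt (Suc h) {6,7,9,10} = 1 * cnt h {0,3,8,11} + 1 * cnt h {2,5,8,11} + 3 * cnt h {0,1,2,3,4,5,8,11}"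
  by (simp add: cnt_Suc step ff_def idx_def Let_def upt12 insert_commute numeral_2_eq_2[symmetric] cong: if_weak_cong; linarith?)
lemma tr13: "cnt (Suc h) {0,1,9,10} = 1 * cnt h {2,5,8,11} + 2 * cnt h {2,3,4,5,6,7,8,11}"
  by (simp add: cnt_Suc step ff_def idx_def Let_def upt12 insert_commute numeral_2_eq_2[symmetric] cong: if_weak_cong; linarith?)
lemma tr14: "cnt (Suc h) {0,1,3,4} = 1 * cnt h {2,5,6,9} + 1 * cnt h {2,5,8,11} + 3 * cnt h {2,5,6,7,8,9,10,11}"
  by (simp add: cnt_Suc step ff_def idx_def Let_def upt12 insert_commute numeral_2_eq_2[symmetric] cong: if_weak_cong; linarith?)
lemma tr15: "cnt (Suc h) {0,1,3,4,6,7,9,10} = 1 * cnt h {2,5,8,11}"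
  by (simp add: cnt_Suc step ff_def idx_def Let_def upt12 insert_commute numeral_2_eq_2[symmetric] cong: if_weak_cong; linarith?)
lemma tr16: "cnt (Suc h) {7,8,10,11} = 1 * cnt h {0,3,6,9} + 1 * cnt h {2,5,6,9} + 3 * cnt h {0,1,2,3,4,5,6,9}"
  by (simp add: cnt_Suc step ff_def idx_def Let_def upt12 insert_commute numeral_2_eq_2[symmetric] cong: if_weak_cong; linarith?)
lemma tr17: "cnt (Suc h) {0,1,3,4,7,8,10,11} = 1 * cnt h {2,5,6,9}"
  by (simp add: cnt_Suc step ff_def idx_def Let_def upt12 insert_commute numeral_2_eq_2[symmetric] cong: if_weak_cong; linarith?)
lemma tr18: "cnt (Suc h) {3,4,6,7} = 1 * cnt h {0,1,2,5,8,9,10,11}"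
  by (simp add: cnt_Suc step ff_def idx_def Let_def upt12 insert_commute numeral_2_eq_2[symmetric] cong: if_weak_cong; linarith?)
lemma tr19: "cnt (Suc h) {1,2,4,5} = 1 * cnt h {0,3,6,9} + 1 * cnt h {0,3,8,11} + 3 * cnt h {0,3,6,7,8,9,10,11}"
  by (simp add: cnt_Suc step ff_def idx_def Let_def upt12 insert_commute numeral_2_eq_2[symmetric] cong: if_weak_cong; linarith?)
lemma tr20: "cnt (Suc h) {1,2,4,5,6,7,9,10} = 1 * cnt h {0,3,8,11}"
  by (simp add: cnt_Suc step ff_def idx_def Let_def upt12 insert_commute numeral_2_eq_2[symmetric] cong: if_weak_cong; linarith?)
lemma tr21: "cnt (Suc h) {1,2,10,11} = 1 * cnt h {0,3,6,9} + 2 * cnt h {0,3,4,5,6,7,8,9}"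
  by (simp add: cnt_Suc step ff_def idx_def Let_def upt12 insert_commute numeral_2_eq_2[symmetric] cong: if_weak_cong; linarith?)
lemma tr22: "cnt (Suc h) {1,2,4,5,7,8,10,11} = 1 * cnt h {0,3,6,9}"
  by (simp add: cnt_Suc step ff_def idx_def Let_def upt12 insert_commute numeral_2_eq_2[symmetric] cong: if_weak_cong; linarith?)
lemma tr23: "cnt (Suc h) {4,5,7,8} = 1 * cnt h {0,1,2,3,6,9,10,11}"
  by (simp add: cnt_Suc step ff_def idx_def Let_def upt12 insert_commute numeral_2_eq_2[symmetric] cong: if_weak_cong; linarith?)
lemma tr24: "cnt (Suc h) {2,3,4,5,6,7,8,11} = 1 * cnt h {0,1,9,10}"
  by (simp add: cnt_Suc step ff_def idx_def Let_def upt12 insert_commute numeral_2_eq_2[symmetric] cong: if_weak_cong; linarith?)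
lemma tr25: "cnt (Suc h) {0,3,4,5,6,7,8,9} = 1 * cnt h {1,2,10,11}"
  by (simp add: cnt_Suc step ff_def idx_def Let_def upt12 insert_commute numeral_2_eq_2[symmetric] cong: if_weak_cong; linarith?)
lemma al1: "cnt (h + 1) {} = 1 * cnt h {0,3,6,9} + 1 * cnt h {2,5,6,9} + 3 * cnt h {0,1,2,3,4,5,6,9} + 1 * cnt h {0,3,8,11} + 1 * cnt h {2,5,8,11} + 3 * cnt h {0,1,2,3,4,5,8,11} + 1 * cnt h {0,1,2,3,6,9,10,11} + 1 * cnt h {0,1,2,5,8,9,10,11} + 3 * cnt h {0,3,6,7,8,9,10,11} + 3 * cnt h {2,5,6,7,8,9,10,11} + 11 * cnt h {0,1,2,3,4,5,6,7,8,9,10,11}"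
  using tr0 by simp
lemma al2: "cnt (h + 2) {} = 29 * cnt h {} + 10 * cnt h {0,1,3,4} + 10 * cnt h {1,2,4,5} + 2 * cnt h {3,4,6,7} + 2 * cnt h {4,5,7,8} + 1 * cnt h {0,1,9,10} + 10 * cnt h {6,7,9,10} + 5 * cnt h {0,1,3,4,6,7,9,10} + 4 * cnt h {1,2,4,5,6,7,9,10} + 1 * cnt h {1,2,10,11} + 10 * cnt h {7,8,10,11} + 4 * cnt h {0,1,3,4,7,8,10,11} + 5 * cnt h {1,2,4,5,7,8,10,11}"
proof -
  have e: "h + 2 = Suc h + 1" by simp
  show ?thesis unfolding e al1[of "Suc h"] tr10 tr3 tr7 tr8 tr1 tr5 tr11 tr4 tr9 tr2 tr6
    by (simp add: distrib_left)
qed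
lemma al3: "cnt (h + 3) {} = 55 * cnt h {0,3,6,9} + 53 * cnt h {2,5,6,9} + 117 * cnt h {0,1,2,3,4,5,6,9} + 2 * cnt h {0,3,4,5,6,7,8,9} + 53 * cnt h {0,3,8,11} + 55 * cnt h {2,5,8,11} + 117 * cnt h {0,1,2,3,4,5,8,11} + 2 * cnt h {2,3,4,5,6,7,8,11} + 31 * cnt h {0,1,2,3,6,9,10,11} + 31 * cnt h {0,1,2,5,8,9,10,11} + 117 * cnt h {0,3,6,7,8,9,10,11} + 117 * cnt h {2,5,6,7,8,9,10,11} + 319 * cnt h {0,1,2,3,4,5,6,7,8,9,10,11}"
proof -
  have e: "h + 3 = Suc h + 2" by simp
  show ?thesis unfolding e al2[of "Suc h"] tr0 tr14 tr19 tr18 tr23 tr13 tr12 tr15 tr20 tr21 tr16 tr17 tr22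
    by (simp add: distrib_left)
qed
lemma al4: "cnt (h + 4) {} = 1065 * cnt h {} + 450 * cnt h {0,1,3,4} + 450 * cnt h {1,2,4,5} + 62 * cnt h {3,4,6,7} + 62 * cnt h {4,5,7,8} + 57 * cnt h {0,1,9,10} + 450 * cnt h {6,7,9,10} + 275 * cnt h {0,1,3,4,6,7,9,10} + 212 * cnt h {1,2,4,5,6,7,9,10} + 57 * cnt h {1,2,10,11} + 450 * cnt h {7,8,10,11} + 212 * cnt h {0,1,3,4,7,8,10,11} + 275 * cnt h {1,2,4,5,7,8,10,11}"
proof -
  have e: "h + 4 = Suc h + 3" by simp
  show ?thesis unfolding e al3[of "Suc h"] tr10 tr3 tr7 tr25 tr8 tr1 tr5 tr24 tr11 tr4 tr9 tr2 tr6
    by (simp add: distrib_left)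
qed
lemma al5: "cnt (h + 5) {} = 2297 * cnt h {0,3,6,9} + 2177 * cnt h {2,5,6,9} + 4545 * cnt h {0,1,2,3,4,5,6,9} + 114 * cnt h {0,3,4,5,6,7,8,9} + 2177 * cnt h {0,3,8,11} + 2297 * cnt h {2,5,8,11} + 4545 * cnt h {0,1,2,3,4,5,8,11} + 114 * cnt h {2,3,4,5,6,7,8,11} + 1127 * cnt h {0,1,2,3,6,9,10,11} + 1127 * cnt h {0,1,2,5,8,9,10,11} + 4545 * cnt h {0,3,6,7,8,9,10,11} + 4545 * cnt h {2,5,6,7,8,9,10,11} + 11715 * cnt h {0,1,2,3,4,5,6,7,8,9,10,11}"
proof -
  have e: "h + 5 = Suc h + 4" by simp
  show ?thesis unfolding e al4[of "Suc h"] tr0 tr14 tr19 tr18 tr23 tr13 tr12 tr15 tr20 tr21 tr16 tr17 tr22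
    by (simp add: distrib_left)
qed
lemma al6: "cnt (h + 6) {} = 41097 * cnt h {} + 18038 * cnt h {0,1,3,4} + 18038 * cnt h {1,2,4,5} + 2254 * cnt h {3,4,6,7} + 2254 * cnt h {4,5,7,8} + 2411 * cnt h {0,1,9,10} + 18038 * cnt h {6,7,9,10} + 11485 * cnt h {0,1,3,4,6,7,9,10} + 8708 * cnt h {1,2,4,5,6,7,9,10} + 2411 * cnt h {1,2,10,11} + 18038 * cnt h {7,8,10,11} + 8708 * cnt h {0,1,3,4,7,8,10,11} + 11485 * cnt h {1,2,4,5,7,8,10,11}"
proof -
  have e: "h + 6 = Suc h + 5" by simp
  show ?thesis unfolding e al5[of "Suc h"] tr10 tr3 tr7 tr25 tr8 tr1 tr5 tr24 tr11 tr4 tr9 tr2 tr6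
    by (simp add: distrib_left)
qed
lemma al7: "cnt (h + 7) {} = 91069 * cnt h {0,3,6,9} + 85881 * cnt h {2,5,6,9} + 177405 * cnt h {0,1,2,3,4,5,6,9} + 4822 * cnt h {0,3,4,5,6,7,8,9} + 85881 * cnt h {0,3,8,11} + 91069 * cnt h {2,5,8,11} + 177405 * cnt h {0,1,2,3,4,5,8,11} + 4822 * cnt h {2,3,4,5,6,7,8,11} + 43351 * cnt h {0,1,2,3,6,9,10,11} + 43351 * cnt h {0,1,2,5,8,9,10,11} + 177405 * cnt h {0,3,6,7,8,9,10,11} + 177405 * cnt h {2,5,6,7,8,9,10,11} + 452067 * cnt h {0,1,2,3,4,5,6,7,8,9,10,11}"
proof -
  have e: "h + 7 = Suc h + 6" by simp
  show ?thesis unfolding e al6[of "Suc h"] tr0 tr14 tr19 tr18 tr23 tr13 tr12 tr15 tr20 tr21 tr16 tr17 tr22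
    by (simp add: distrib_left)
qed
lemma al8: "cnt (h + 8) {} = 1602289 * cnt h {} + 708710 * cnt h {0,1,3,4} + 708710 * cnt h {1,2,4,5} + 86702 * cnt h {3,4,6,7} + 86702 * cnt h {4,5,7,8} + 95891 * cnt h {0,1,9,10} + 708710 * cnt h {6,7,9,10} + 455345 * cnt h {0,1,3,4,6,7,9,10} + 343524 * cnt h {1,2,4,5,6,7,9,10} + 95891 * cnt h {1,2,10,11} + 708710 * cnt h {7,8,10,11} + 343524 * cnt h {0,1,3,4,7,8,10,11} + 455345 * cnt h {1,2,4,5,7,8,10,11}"
proof -
  have e: "h + 8 = Suc h + 7" by simp
  show ?thesis unfolding e al7[of "Suc h"] tr10 tr3 tr7 tr25 tr8 tr1 tr5 tr24 tr11 tr4 tr9 tr2 tr6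
    by (simp add: distrib_left)
qed
lemma al9: "cnt (h + 9) {} = 3570945 * cnt h {0,3,6,9} + 3363233 * cnt h {2,5,6,9} + 6932997 * cnt h {0,1,2,3,4,5,6,9} + 191782 * cnt h {0,3,4,5,6,7,8,9} + 3363233 * cnt h {0,3,8,11} + 3570945 * cnt h {2,5,8,11} + 6932997 * cnt h {0,1,2,3,4,5,8,11} + 191782 * cnt h {2,3,4,5,6,7,8,11} + 1688991 * cnt h {0,1,2,3,6,9,10,11} + 1688991 * cnt h {0,1,2,5,8,9,10,11} + 6932997 * cnt h {0,3,6,7,8,9,10,11} + 6932997 * cnt h {2,5,6,7,8,9,10,11} + 17625179 * cnt h {0,1,2,3,4,5,6,7,8,9,10,11}"
proof -
  have e: "h + 9 = Suc h + 8" by simp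
  show ?thesis unfolding e al8[of "Suc h"] tr0 tr14 tr19 tr18 tr23 tr13 tr12 tr15 tr20 tr21 tr16 tr17 tr22
    by (simp add: distrib_left)
qed
lemma al10: "cnt (h + 10) {} = 62603505 * cnt h {} + 27734350 * cnt h {0,1,3,4} + 27734350 * cnt h {1,2,4,5} + 3377982 * cnt h {3,4,6,7} + 3377982 * cnt h {4,5,7,8} + 3762727 * cnt h {0,1,9,10} + 27734350 * cnt h {6,7,9,10} + 17854725 * cnt h {0,1,3,4,6,7,9,10} + 13452932 * cnt h {1,2,4,5,6,7,9,10} + 3762727 * cnt h {1,2,10,11} + 27734350 * cnt h {7,8,10,11} + 13452932 * cnt h {0,1,3,4,7,8,10,11} + 17854725 * cnt h {1,2,4,5,7,8,10,11}"
proof -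
  have e: "h + 10 = Suc h + 9" by simp
  show ?thesis unfolding e al9[of "Suc h"] tr10 tr3 tr7 tr25 tr8 tr1 tr5 tr24 tr11 tr4 tr9 tr2 tr6
    by (simp add: distrib_left)
qed
lemma recur: "cnt (h+10) {} + 700 * cnt (h+6) {} + 5180 * cnt (h+2) {} = 55 * cnt (h+8) {} + 3186 * cnt (h+4) {} + 2640 * cnt h {}"
  unfolding al10 al8 al6 al4 al2 by simp

lemma cnt0: "cnt 0 S = (if S = {} then 1 else 0)" by (simp add: cnt_def)
lemma val1: "cnt 1 {} = 0" unfolding al1[of 0, unfolded add_0] cnt0 by simp
lemma val2: "cnt 2 {} = 29" unfolding al2[of 0, unfolded add_0] cnt0 by simp
lemma val3: "cnt 3 {} = 0" unfolding al3[of 0, unfolded add_0] cnt0 by simp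
lemma val4: "cnt 4 {} = 1065" unfolding al4[of 0, unfolded add_0] cnt0 by simp
lemma val5: "cnt 5 {} = 0" unfolding al5[of 0, unfolded add_0] cnt0 by simp
lemma val6: "cnt 6 {} = 41097" unfolding al6[of 0, unfolded add_0] cnt0 by simp
lemma val7: "cnt 7 {} = 0" unfolding al7[of 0, unfolded add_0] cnt0 by simp
lemma val8: "cnt 8 {} = 1602289" unfolding al8[of 0, unfolded add_0] cnt0 by simp
lemma val9: "cnt 9 {} = 0" unfolding al9[of 0, unfolded add_0] cnt0 by simp
lemma val10: "cnt 10 {} = 62603505" unfolding al10[of 0, unfolded add_0] cnt0 by simp
lemma cuboid_prod: "cuboid a b d p q r = {a..<a+p} \<times> {b..<b+q} \<times> {d..<d+r}"
  by (auto simp: cuboid_def)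

lemma brick_card: "is_brick 1 2 2 B \<Longrightarrow> card B = 4 \<and> finite B"
  unfolding is_brick_def by (auto simp: cuboid_prod card_cartesian_product)

lemma til_card: assumes "P \<in> til R" shows "card R = 4 * card P"
proof -
  have bP: "\<forall>B\<in>P. is_brick 1 2 2 B" and dP: "\<forall>B\<in>P. \<forall>C\<in>P. B \<noteq> C \<longrightarrow> B \<inter> C = {}"
    and uP: "\<Union>P = R" using assms unfolding til_def by auto
  have "pairwise disjnt P" using dP unfolding pairwise_def disjnt_def by auto
  then have "card (\<Union>P) = sum card P"
    by (rule card_Union_disjoint) (use bP brick_card in auto)
  also have "\<dots> = sum (\<lambda>_. 4) P" by (rule sum.cong) (use bP brick_card in auto)
  finally show ?thesis using uP by simp
qed

lemma T_cnt: "T N = (if 3 dvd N then cnt (N div 3) {} else 0)"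
proof (cases "3 dvd N")
  case True
  define n where "n = N div 3"
  have N: "N = 3 * n" using True unfolding n_def by auto
  have tl: "tilings 1 2 2 3 4 n = til (cuboid 0 0 0 3 4 n)" unfolding tilings_def til_def by simp
  have ccard: "card (cuboid 0 0 0 3 4 n) = 12 * n" by (simp add: cuboid_prod card_cartesian_product)
  have "{P \<in> til (cuboid 0 0 0 3 4 n). card P = N} = til (cuboid 0 0 0 3 4 n)"
    using til_card[where R="cuboid 0 0 0 3 4 n"] ccard N by auto
  moreover have "card (til (cuboid 0 0 0 3 4 n)) = cnt n {}"
  proof (cases "n = 0")
    case True
    have "cuboid 0 0 0 3 4 n = {}" using True by (auto simp: cuboid_def)
    then show ?thesis using True by (simp add: til_empty cnt_def)
  next
    case False
    have "RR n {} = cuboid 0 0 0 3 4 n" by (auto simp: RR_def cuboid_def)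
    then show ?thesis using False by (simp add: cnt_def)
  qed
  ultimately have "card {P \<in> tilings 1 2 2 3 4 n. card P = N} = cnt n {}" unfolding tl by simp
  then show ?thesis using True unfolding T_def n_def by simp
qed (simp add: T_def)

lemma T3: "T (3 * k) = cnt k {}" by (simp add: T_cnt)

lemma nX: "fps_nth (numeral c * (fps_X^k :: rat fps)) n = (if n = k then numeral c else 0)"
  by (simp add: numeral_fps_const)

lemma nXA: "fps_nth (numeral c * fps_X^k * (f :: rat fps)) n = (if n < k then 0 else numeral c * fps_nth f (n - k))"
  by (simp add: numeral_fps_const fps_X_power_mult_nth mult.assoc)

lemma Tval: "3 dvd N \<Longrightarrow> T N = cnt (N div 3) {}" "\<not> 3 dvd N \<Longrightarrow> T N = 0"
  by (simp_all add: T_cnt)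

lemma val1': "cnt (Suc 0) {} = 0" using val1 by simp

lemma upt30: "[0..<30] = [0,1,2,3,4,5,6,7,8,9,10,11,12,13,14,15,16,17,18,19,20,21,22,23,24,25,26,27,28,29::nat]"
  by (simp add: upt_rec numeral_eq_Suc)

theorem mainTheorem17:
  shows "Abs_fps (\<lambda>N. of_nat (T N) :: rat) =
    ((1 - 2 * fps_X ^ 6) * (1 - 24 * fps_X ^ 6 + 122 * fps_X ^ 12 - 120 * fps_X ^ 18)) /
    ((1 - fps_X ^ 6) * (1 - 54 * fps_X ^ 6 + 646 * fps_X ^ 12 - 2540 * fps_X ^ 18 + 2640 * fps_X ^ 24))"
proof -
  define A where "A = Abs_fps (\<lambda>N. of_nat (T N) :: rat)"
  define Pp :: "rat fps" where "Pp = 1 - 26 * fps_X^6 + 170 * fps_X^12 - 364 * fps_X^18 + 240 * fps_X^24"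
  define Qp :: "rat fps" where "Qp = 1 - 55 * fps_X^6 + 700 * fps_X^12 - 3186 * fps_X^18 + 5180 * fps_X^24 - 2640 * fps_X^30"
  have num: "(1 - 2 * fps_X ^ 6) * (1 - 24 * fps_X ^ 6 + 122 * fps_X ^ 12 - 120 * fps_X ^ 18) = Pp"
    unfolding Pp_def by algebra
  have den: "(1 - fps_X ^ 6) * (1 - 54 * fps_X ^ 6 + 646 * fps_X ^ 12 - 2540 * fps_X ^ 18 + 2640 * fps_X ^ 24) = Qp"
    unfolding Qp_def by algebra
  have QA: "Qp * A = A - 55 * fps_X^6 * A + 700 * fps_X^12 * A - 3186 * fps_X^18 * A + 5180 * fps_X^24 * A - 2640 * fps_X^30 * A"
    unfolding Qp_def by algebra
  have Ann: "fps_nth A n = of_nat (T n)" for n unfolding A_def by simp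
  have Ppn: "fps_nth Pp n = (if n = 0 then 1 else 0) - (if n = 6 then 26 else 0) + (if n = 12 then 170 else 0)
      - (if n = 18 then 364 else 0) + (if n = 24 then 240 else 0)" for n
    unfolding Pp_def by (simp only: fps_add_nth fps_sub_nth nX) simp
  have QAn: "fps_nth (Qp * A) n = of_nat (T n) - (if n < 6 then 0 else 55 * of_nat (T (n-6)))
     + (if n < 12 then 0 else 700 * of_nat (T (n-12))) - (if n < 18 then 0 else 3186 * of_nat (T (n-18)))
     + (if n < 24 then 0 else 5180 * of_nat (T (n-24))) - (if n < 30 then 0 else 2640 * of_nat (T (n-30)))" for n
    unfolding QA by (simp only: fps_add_nth fps_sub_nth nXA Ann)
  have coef: "fps_nth (Qp * A) n = fps_nth Pp n" for n
  proof (cases "n < 30")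
    case True
    have "n \<in> set [0..<30]" using True by simp
    then show ?thesis unfolding upt30 QAn Ppn
      by (auto simp: Tval val1' val1 val2 val3 val4 val5 val6 val7 val8 val9 val10 cnt0)
  next
    case False
    show ?thesis
    proof (cases "3 dvd n")
      case True
      then obtain m where m: "n = 3 * m" by auto
      have m10: "m \<ge> 10" using False m by simp
      define h where "h = m - 10"
      have h: "m = h + 10" using m10 unfolding h_def by simp
      have e: "n = 3*(h+10)" "n - 6 = 3*(h+8)" "n - 12 = 3*(h+6)" "n - 18 = 3*(h+4)" "n - 24 = 3*(h+2)" "n - 30 = 3*h"
        using m h by simp_all
      have rec: "rat_of_nat (cnt (h+10) {}) + 700 * of_nat (cnt (h+6) {}) + 5180 * of_nat (cnt (h+2) {})
          = 55 * of_nat (cnt (h+8) {}) + 3186 * of_nat (cnt (h+4) {}) + 2640 * of_nat (cnt h {})"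
        using arg_cong[where f="rat_of_nat", OF recur[of h]] by simp
      have t: "T (n-6) = cnt (h+8) {}" "T (n-12) = cnt (h+6) {}"
        "T (n-18) = cnt (h+4) {}" "T (n-24) = cnt (h+2) {}" "T (n-30) = cnt h {}"
        by (simp_all only: e(2-6) T3)
      have t0: "T n = cnt (h+10) {}" by (simp only: e(1) T3)
      show ?thesis unfolding QAn Ppn t t0 using False rec by simp
    next
      case nd: False
      have "\<not> 3 dvd (n - k)" if "k \<le> n" "6 dvd k" for k
      proof
        assume "3 dvd (n - k)"
        moreover have "3 dvd k" using that(2) by (rule dvd_trans[rotated]) simp
        ultimately have "3 dvd (n - k + k)" by (rule dvd_add)
        then show False using nd that(1) by simp
      qed
      then have z: "T (n-6) = 0" "T (n-12) = 0" "T (n-18) = 0" "T (n-24) = 0" "T (n-30) = 0" "T n = 0"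
        using False nd by (simp_all add: Tval)
      show ?thesis unfolding QAn Ppn using False z by simp
    qed
  qed
  have QPA: "Qp * A = Pp" by (rule fps_ext) (rule coef)
  have Q0: "fps_nth Qp 0 \<noteq> 0" unfolding Qp_def by (simp add: nX)
  have "Pp / Qp = A"
    unfolding QPA[symmetric] fps_divide_unit[OF Q0] using inverse_mult_eq_1'[OF Q0]
    by (simp add: mult.commute mult.left_commute)
  then show ?thesis unfolding num den A_def by simp
qed

end
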